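(* Let $Q\subseteq M$ be nonempty, let $y\in Q$, and let $A_0=\max_{q\in Q}d(y,q)$; assume $A_0>0$ and let $i$ be the integer with $2^{i-1}<A_0\le 2^i$. Let $a\in M$ minimize $\max_{q\in Q}d(z,q)$ over $z\in M$. Let $y_i$ be the level-$i$ ancestor of $y$ and $a_{i-1}$ the level-$(i-1)$ ancestor of $a$. Then $a_{i-1}\in L_{y_i,i,6}$, i.e. $d(a_{i-1},y_i)\le 6\cdot 2^i$.
   Context: $(M,d)$ is a finite metric space with at least two points whose minimum interpoint distance is $1$; let $i_{\mathrm{top}}=\lceil\log_2\operatorname{diam}(M)\rceil$. Net hierarchy: $Y_0=M$, and for $i=1,\dots,i_{\mathrm{top}}$, $Y_i\subseteq Y_{i-1}$ is a $2^i$-net of $Y_{i-1}$, i.e. any two distinct points of $Y_i$ are at distance $\ge 2^i$ and every point of $Y_{i-1}$ is at distance $<2^i$ from some point of $Y_i$. By convention $Y_i=M$ for all integers $i<0$. The tree $T$ has nodes $(y,i)$ for integers $i\le i_{\mathrm{top}}$ and $y\in Y_i$. For $1\le i\le i_{\mathrm{top}}$, each node $(z,i-1)$ has as parent a node $(y,i)$ with $y\in Y_i$ and $d(y,z)\le 2^i$ (chosen to be $(z,i)$ when $z\in Y_i$). For $i\le 0$, the parent of $(x,i-1)$ is $(x,i)$. For $x\in M$ and an integer $l\le i_{\mathrm{top}}$, the level-$l$ ancestor of $x$ is the point $w\in Y_l$ such that $(w,l)$ is an ancestor of $(x,0)$ in $T$ if $l\ge0$, and is $x$ itself if $l<0$.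 For $y\in Y_i$ and $c\ge1$, $L_{y,i,c}=\{z\in Y_{i-1}: d(y,z)\le c\,2^i\}$. *)

theory Defs
  imports "HOL-Analysis.Analysis"
begin

definition metric_on :: "'a set \<Rightarrow> ('a \<Rightarrow> 'a \<Rightarrow> real) \<Rightarrow> bool" where
  "metric_on M d \<longleftrightarrow>
     (\<forall>x\<in>M. \<forall>y\<in>M. d x y \<ge> 0 \<and> (d x y = 0 \<longleftrightarrow> x = y) \<and> d x y = d y x) \<and>
     (\<forall>x\<in>M. \<forall>y\<in>M. \<forall>z\<in>M. d x z \<le> d x y + d y z)"

definition diam :: "'a set \<Rightarrow> ('a \<Rightarrow> 'a \<Rightarrow> real) \<Rightarrow> real" where
  "diam M d = Max {d x y | x y. x \<in> M \<and> y \<in> M}"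

definition itop :: "'a set \<Rightarrow> ('a \<Rightarrow> 'a \<Rightarrow> real) \<Rightarrow> int" where
  "itop M d = \<lceil>log 2 (diam M d)\<rceil>"

definition net_hierarchy :: "'a set \<Rightarrow> ('a \<Rightarrow> 'a \<Rightarrow> real) \<Rightarrow> (nat \<Rightarrow> 'a set) \<Rightarrow> bool" where
  "net_hierarchy M d Y \<longleftrightarrow> Y 0 = M \<and>
     (\<forall>i::nat. 1 \<le> i \<and> int i \<le> itop M d \<longrightarrow>
        Y i \<subseteq> Y (i - 1) \<and>
        (\<forall>p\<in>Y i. \<forall>q\<in>Y i. p \<noteq> q \<longrightarrow> d p q \<ge> 2 ^ i) \<and>
        (\<forall>z\<in>Y (i - 1). \<exists>y\<in>Y i. d y z < 2 ^ i))"

text \<open>Parent map of the tree: par i z is the point y with (y,i) the parent of (z,i-1),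
  for 1 <= i <= i_top.  (Below level 0 the parent of (x,i-1) is (x,i).)\<close>
definition parent_map :: "'a set \<Rightarrow> ('a \<Rightarrow> 'a \<Rightarrow> real) \<Rightarrow> (nat \<Rightarrow> 'a set) \<Rightarrow> (nat \<Rightarrow> 'a \<Rightarrow> 'a) \<Rightarrow> bool" where
  "parent_map M d Y par \<longleftrightarrow>
     (\<forall>i::nat. 1 \<le> i \<and> int i \<le> itop M d \<longrightarrow>
        (\<forall>z\<in>Y (i - 1). par i z \<in> Y i \<and> d (par i z) z \<le> 2 ^ i \<and> (z \<in> Y i \<longrightarrow> par i z = z)))"

fun anc_nat :: "(nat \<Rightarrow> 'a \<Rightarrow> 'a) \<Rightarrow> nat \<Rightarrow> 'a \<Rightarrow> 'a" where
  "anc_nat par 0 x = x"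
| "anc_nat par (Suc l) x = par (Suc l) (anc_nat par l x)"

definition ancestor :: "(nat \<Rightarrow> 'a \<Rightarrow> 'a) \<Rightarrow> int \<Rightarrow> 'a \<Rightarrow> 'a" where
  "ancestor par l x = (if l < 0 then x else anc_nat par (nat l) x)"

definition level :: "'a set \<Rightarrow> (nat \<Rightarrow> 'a set) \<Rightarrow> int \<Rightarrow> 'a set" where
  "level M Y i = (if i < 0 then M else Y (nat i))"

definition Lset :: "'a set \<Rightarrow> ('a \<Rightarrow> 'a \<Rightarrow> real) \<Rightarrow> (nat \<Rightarrow> 'a set) \<Rightarrow> 'a \<Rightarrow> int \<Rightarrow> real \<Rightarrow> 'a set" where
  "Lset M d Y y i c = {z \<in> level M Y (i - 1). d y z \<le> c * 2 powr (real_of_int i)}"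

end

theory Submission
  imports Defs
begin

lemma met_tri: "metric_on M d \<Longrightarrow> u \<in> M \<Longrightarrow> v \<in> M \<Longrightarrow> w \<in> M \<Longrightarrow> d u w \<le> d u v + d v w"
  unfolding metric_on_def by blast

lemma met_sym: "metric_on M d \<Longrightarrow> u \<in> M \<Longrightarrow> v \<in> M \<Longrightarrow> d u v = d v u"
  unfolding metric_on_def by blast

lemma met_zero: "metric_on M d \<Longrightarrow> u \<in> M \<Longrightarrow> d u u = 0"
  unfolding metric_on_def by blast

lemma anc_props:
  fixes M :: "'a set" and d :: "'a \<Rightarrow> 'a \<Rightarrow> real"
  assumes met: "metric_on M d" and net: "net_hierarchy M d Y"
    and par: "parent_map M d Y par" and xM: "x \<in> M"
  shows "int l \<le> itop M d \<Longrightarrow> Y l \<subseteq> M \<and> anc_nat par l x \<in> Y l \<and>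
           d (anc_nat par l x) x \<le> 2 ^ (l+1) - 2"
proof (induction l)
  case 0
  have "Y 0 = M" using net unfolding net_hierarchy_def by (rule conjunct1)
  moreover have "d x x = 0" using met xM by (rule met_zero)
  ultimately show ?case using xM by simp
next
  case (Suc l)
  let ?z = "anc_nat par l x"
  have IH: "Y l \<subseteq> M" "?z \<in> Y l" "d ?z x \<le> 2 ^ (l+1) - 2" using Suc by auto
  have c: "1 \<le> Suc l \<and> int (Suc l) \<le> itop M d" using Suc.prems by simp
  have H: "\<forall>i::nat. 1 \<le> i \<and> int i \<le> itop M d \<longrightarrow>
        Y i \<subseteq> Y (i - 1) \<and>
        (\<forall>p\<in>Y i. \<forall>q\<in>Y i. p \<noteq> q \<longrightarrow> d p q \<ge> 2 ^ i) \<and>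
        (\<forall>z\<in>Y (i - 1). \<exists>y\<in>Y i. d y z < 2 ^ i)"
    using net unfolding net_hierarchy_def by (rule conjunct2)
  have "Y (Suc l) \<subseteq> Y (Suc l - 1)" using mp[OF spec[OF H, of "Suc l"] c] by (rule conjunct1)
  then have sub: "Y (Suc l) \<subseteq> Y l" by simp
  have P: "\<forall>i::nat. 1 \<le> i \<and> int i \<le> itop M d \<longrightarrow>
        (\<forall>z\<in>Y (i - 1). par i z \<in> Y i \<and> d (par i z) z \<le> 2 ^ i \<and> (z \<in> Y i \<longrightarrow> par i z = z))"
    using par unfolding parent_map_def .
  have zz: "?z \<in> Y (Suc l - 1)" using IH(2) by simp
  have pp: "par (Suc l) ?z \<in> Y (Suc l) \<and> d (par (Suc l) ?z) ?z \<le> 2 ^ Suc l \<and> (?z \<in> Y (Suc l) \<longrightarrow> par (Suc l) ?z = ?z)"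
    using bspec[OF mp[OF spec[OF P, of "Suc l"] c] zz] .
  have p1: "par (Suc l) ?z \<in> Y (Suc l)" and p2: "d (par (Suc l) ?z) ?z \<le> 2 ^ Suc l"
    using pp by simp_all
  have inM: "par (Suc l) ?z \<in> M" "?z \<in> M" using p1 sub IH by auto
  have "d (par (Suc l) ?z) x \<le> d (par (Suc l) ?z) ?z + d ?z x"
    using met inM(1) inM(2) xM by (rule met_tri)
  also have "\<dots> \<le> 2 ^ Suc l + (2 ^ (l+1) - 2)" using p2 IH(3) by linarith
  also have "\<dots> = 2 ^ (Suc l + 1) - 2" by simp
  finally have "d (par (Suc l) ?z) x \<le> 2 ^ (Suc l + 1) - 2" .
  then show ?case using sub IH p1 by auto
qed

lemma ancestor_props:
  fixes M :: "'a set" and d :: "'a \<Rightarrow> 'a \<Rightarrow> real"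
  assumes met: "metric_on M d" and net: "net_hierarchy M d Y"
    and par: "parent_map M d Y par" and xM: "x \<in> M" and l: "l \<le> itop M d"
  shows "ancestor par l x \<in> level M Y l \<and> ancestor par l x \<in> M \<and>
         d (ancestor par l x) x \<le> 2 powr (real_of_int l + 1)"
proof (cases "l < 0")
  case True
  then show ?thesis using xM met_zero[OF met xM] unfolding ancestor_def level_def by simp
next
  case False
  have "int (nat l) \<le> itop M d" using False l by simp
  from anc_props[OF met net par xM this]
  have h: "Y (nat l) \<subseteq> M" "anc_nat par (nat l) x \<in> Y (nat l)"
    "d (anc_nat par (nat l) x) x \<le> 2 ^ (nat l + 1) - 2" by auto
  have "(2::real) ^ (nat l + 1) = 2 powr (real_of_int l + 1)"
  proof -
    have "(2::real) ^ (nat l + 1) = 2 powr real (nat l + 1)" by (rule powr_realpow[symmetric]) simp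
    also have "real (nat l + 1) = real_of_int l + 1" using False by simp
    finally show ?thesis .
  qed
  then show ?thesis using h False unfolding ancestor_def level_def by auto
qed

theorem mainTheorem6:
  fixes M :: "'a set" and d :: "'a \<Rightarrow> 'a \<Rightarrow> real"
    and Y :: "nat \<Rightarrow> 'a set" and par :: "nat \<Rightarrow> 'a \<Rightarrow> 'a"
    and Q :: "'a set" and y a :: 'a and i :: int
  assumes fin: "finite M" and two: "card M \<ge> 2"
    and met: "metric_on M d"
    and mind: "\<forall>x\<in>M. \<forall>z\<in>M. x \<noteq> z \<longrightarrow> d x z \<ge> 1"
    and mind1: "\<exists>x\<in>M. \<exists>z\<in>M. x \<noteq> z \<and> d x z = 1"
    and net: "net_hierarchy M d Y"
    and par: "parent_map M d Y par"
    and QM: "Q \<subseteq> M" and Qne: "Q \<noteq> {}" and yQ: "y \<in> Q"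
    and A0pos: "Max ((\<lambda>q. d y q) ` Q) > 0"
    and ilow: "2 powr (real_of_int i - 1) < Max ((\<lambda>q. d y q) ` Q)"
    and iup: "Max ((\<lambda>q. d y q) ` Q) \<le> 2 powr (real_of_int i)"
    and aM: "a \<in> M"
    and amin: "\<forall>z\<in>M. Max ((\<lambda>q. d a q) ` Q) \<le> Max ((\<lambda>q. d z q) ` Q)"
  shows "ancestor par (i - 1) a \<in> Lset M d Y (ancestor par i y) i 6"
proof -
  have finQ: "finite Q" using fin QM finite_subset by blast
  have yM: "y \<in> M" using yQ QM by blast
  define A0 where "A0 = Max ((\<lambda>q. d y q) ` Q)"
  obtain q where qQ: "q \<in> Q" and qA: "d y q = A0"
  proof -
    have "A0 \<in> (\<lambda>q. d y q) ` Q" unfolding A0_def using finQ Qne by (intro Max_in) auto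
    then show ?thesis using that by auto
  qed
  have finP: "finite {d x z | x z. x \<in> M \<and> z \<in> M}"
  proof -
    have "{d x z | x z. x \<in> M \<and> z \<in> M} = (\<lambda>(x,z). d x z) ` (M \<times> M)" by auto
    then show ?thesis using fin by simp
  qed
  have "A0 \<le> diam M d" unfolding diam_def
    using qA qQ QM yM finP by (intro Max_ge) auto
  hence dpos: "diam M d > 0" and ilow2: "2 powr (real_of_int i - 1) < diam M d"
    using A0pos ilow unfolding A0_def by auto
  have "real_of_int i - 1 < log 2 (diam M d)"
    using ilow2 dpos by (simp add: less_log_iff)
  also have "\<dots> \<le> real_of_int (itop M d)" unfolding itop_def by simp
  finally have itop: "i \<le> itop M d" by linarith
  have Ay: "d a y \<le> 2 powr real_of_int i"
  proof -
    have "d a y \<le> Max ((\<lambda>q. d a q) ` Q)" using finQ yQ by (intro Max_ge) auto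
    also have "\<dots> \<le> A0" using amin yM unfolding A0_def by blast
    finally show ?thesis using iup unfolding A0_def by simp
  qed
  from ancestor_props[OF met net par yM itop]
  have Y1: "ancestor par i y \<in> M" "d (ancestor par i y) y \<le> 2 powr (real_of_int i + 1)"
    by auto
  from ancestor_props[OF met net par aM, of "i - 1"] itop
  have A1: "ancestor par (i-1) a \<in> level M Y (i-1)" "ancestor par (i-1) a \<in> M"
    "d (ancestor par (i-1) a) a \<le> 2 powr (real_of_int i)" by auto
  let ?yi = "ancestor par i y" and ?a = "ancestor par (i-1) a"
  have p1: "2 powr (real_of_int i + 1) = 2 * 2 powr real_of_int i"
    by (simp add: powr_add)
  have t1: "d ?yi ?a \<le> d ?yi y + d y ?a" using met Y1(1) yM A1(2) by (rule met_tri)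
  have t2: "d y ?a \<le> d y a + d a ?a" using met yM aM A1(2) by (rule met_tri)
  have "d ?yi ?a \<le> d ?yi y + d y a + d a ?a" using t1 t2 by linarith
  moreover have "d y a = d a y" using met yM aM by (rule met_sym)
  moreover have "d a ?a = d ?a a" using met aM A1(2) by (rule met_sym)
  moreover have "(0::real) \<le> 2 powr real_of_int i" by simp
  ultimately have "d ?yi ?a \<le> 6 * 2 powr real_of_int i"
    using Y1 A1 Ay p1 by linarith
  then show ?thesis unfolding Lset_def using A1 by auto
qed

end
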